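(* Let $X$ be a real Banach space, $A$ a non-empty subset of $X$, and $F_1,F_2$ non-empty closed bounded subsets of $X$. (1) Suppose $r(F_1,x)>r(F_2,x)$ for each $x\in A$. If $F_1$ is remotal (respectively uniquely remotal, strongly remotal, SUR, sup-compact) on $A$, then $F_1\cup F_2$ is remotal (respectively uniquely remotal, strongly remotal, SUR, sup-compact) on $A$. If in addition $\inf\{r(F_1,x)-r(F_2,x):x\in A\}>0$ and $F_1$ is USUR on $A$, then $F_1\cup F_2$ is USUR on $A$. (2) If $r(F_1,x)=r(F_2,x)$ for each $x\in A$ and $F_1,F_2$ are both sup-compact (respectively strongly remotal, remotal) on $A$, then $F_1\cup F_2$ is sup-compact (respectively strongly remotal, remotal) on $A$.
   Context: $B_X$ is the closed unit ball. For non-empty bounded $F$, $x\in X$, $\delta\ge0$: $r(F,x)=\sup_{y\in F}\|x-y\|$, $Q_F(x,\delta)=\{y\in F:\|x-y\|\ge r(F,x)-\delta\}$, $Q_F(x)=Q_F(x,0)$. On a set $A$, $F$ is: remotal if $Q_F(x)\neq\emptyset$ for each $x\in A$; uniquely remotal if $Q_F(x)$ is a singleton for each $x\in A$; strongly remotal if for every $x\in A$ and $\epsilon>0$ there is $\delta>0$ with $Q_F(x,\delta)\subseteq Q_F(x)+\epsilon B_X$; SUR if both uniquely remotal and strongly remotal; USUR if uniquely remotal and for every $\epsilon>0$ there is $\delta>0$ with $Q_F(x,\delta)\subseteq Q_F(x)+\epsilon B_X$ for all $x\in A$; sup-compact if for each $x\in A$ every sequence $(y_n)$ in $F$ with $\|x-y_n\|\to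 r(F,x)$ has a subsequence converging to an element of $F$. *)

theory Defs
  imports "HOL-Analysis.Analysis"
begin

definition farthest_dist :: "'a::real_normed_vector set \<Rightarrow> 'a \<Rightarrow> real" where
  "farthest_dist F x = (SUP y\<in>F. norm (x - y))"

definition farpts :: "'a::real_normed_vector set \<Rightarrow> 'a \<Rightarrow> real \<Rightarrow> 'a set" where
  "farpts F x \<delta> = {y \<in> F. norm (x - y) \<ge> farthest_dist F x - \<delta>}"

definition enlarge :: "'a::real_normed_vector set \<Rightarrow> real \<Rightarrow> 'a set" where
  "enlarge S \<epsilon> = {q + e | q e. q \<in> S \<and> e \<in> (\<lambda>b. \<epsilon> *\<^sub>R b) ` cball 0 1}"

definition remotal_on :: "'a::real_normed_vector set \<Rightarrow> 'a set \<Rightarrow> bool" where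
  "remotal_on F A \<longleftrightarrow> (\<forall>x\<in>A. farpts F x 0 \<noteq> {})"

definition uniquely_remotal_on :: "'a::real_normed_vector set \<Rightarrow> 'a set \<Rightarrow> bool" where
  "uniquely_remotal_on F A \<longleftrightarrow> (\<forall>x\<in>A. \<exists>y. farpts F x 0 = {y})"

definition strongly_remotal_on :: "'a::real_normed_vector set \<Rightarrow> 'a set \<Rightarrow> bool" where
  "strongly_remotal_on F A \<longleftrightarrow>
     (\<forall>x\<in>A. \<forall>\<epsilon>>0. \<exists>\<delta>>0. farpts F x \<delta> \<subseteq> enlarge (farpts F x 0) \<epsilon>)"

definition SUR_on :: "'a::real_normed_vector set \<Rightarrow> 'a set \<Rightarrow> bool" where
  "SUR_on F A \<longleftrightarrow> uniquely_remotal_on F A \<and> strongly_remotal_on F A"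

definition USUR_on :: "'a::real_normed_vector set \<Rightarrow> 'a set \<Rightarrow> bool" where
  "USUR_on F A \<longleftrightarrow> uniquely_remotal_on F A \<and>
     (\<forall>\<epsilon>>0. \<exists>\<delta>>0. \<forall>x\<in>A. farpts F x \<delta> \<subseteq> enlarge (farpts F x 0) \<epsilon>)"

definition sup_compact_on :: "'a::real_normed_vector set \<Rightarrow> 'a set \<Rightarrow> bool" where
  "sup_compact_on F A \<longleftrightarrow>
     (\<forall>x\<in>A. \<forall>y::nat \<Rightarrow> 'a. (\<forall>n. y n \<in> F) \<and>
        ((\<lambda>n. norm (x - y n)) \<longlonglongrightarrow> farthest_dist F x) \<longrightarrow>
        (\<exists>g z. strict_mono g \<and> z \<in> F \<and> (y \<circ> g) \<longlonglongrightarrow> z))"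

end

theory Submission
  imports Defs
begin

lemma fd_bdd:
  fixes F :: "'a::real_normed_vector set"
  assumes "bounded F"
  shows "bdd_above ((\<lambda>y. norm (x - y)) ` F)"
proof -
  obtain a where a: "\<forall>y\<in>F. norm y \<le> a" using assms bounded_iff by blast
  have "\<forall>y\<in>F. norm (x - y) \<le> norm x + a"
    using a by (metis add_left_mono norm_triangle_ineq4 order_trans)
  then show ?thesis by (auto simp: bdd_above_def)
qed

lemma fd_le:
  fixes F :: "'a::real_normed_vector set"
  assumes "bounded F" "y \<in> F"
  shows "norm (x - y) \<le> farthest_dist F x"
  unfolding farthest_dist_def using fd_bdd[OF assms(1)] assms(2)
  by (meson cSUP_upper)

lemma fd_un:
  fixes F1 F2 :: "'a::real_normed_vector set"
  assumes "F1 \<noteq> {}" "F2 \<noteq> {}" "bounded F1" "bounded F2"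
  shows "farthest_dist (F1 \<union> F2) x = max (farthest_dist F1 x) (farthest_dist F2 x)"
  unfolding farthest_dist_def image_Un
  using cSup_union_distrib[of "(\<lambda>y. norm (x - y)) ` F1" "(\<lambda>y. norm (x - y)) ` F2"]
    fd_bdd[OF assms(3)] fd_bdd[OF assms(4)] assms(1,2)
  by (simp add: sup_max)

lemma farpts_gt:
  fixes F1 F2 :: "'a::real_normed_vector set"
  assumes "F1 \<noteq> {}" "F2 \<noteq> {}" "bounded F1" "bounded F2"
    and "farthest_dist F1 x > farthest_dist F2 x"
    and "\<delta> < farthest_dist F1 x - farthest_dist F2 x"
  shows "farpts (F1 \<union> F2) x \<delta> = farpts F1 x \<delta>"
proof -
  have e: "farthest_dist (F1 \<union> F2) x = farthest_dist F1 x"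
    using fd_un[OF assms(1-4)] assms(5) by simp
  have "\<And>y. y \<in> F2 \<Longrightarrow> norm (x - y) < farthest_dist F1 x - \<delta>"
    using fd_le[OF assms(4)] assms(6) by (smt (verit))
  then show ?thesis unfolding farpts_def e by force
qed

lemma farpts_eq:
  fixes F1 F2 :: "'a::real_normed_vector set"
  assumes "F1 \<noteq> {}" "F2 \<noteq> {}" "bounded F1" "bounded F2"
    and "farthest_dist F1 x = farthest_dist F2 x"
  shows "farpts (F1 \<union> F2) x \<delta> = farpts F1 x \<delta> \<union> farpts F2 x \<delta>"
proof -
  have e: "farthest_dist (F1 \<union> F2) x = farthest_dist F1 x"
    using fd_un[OF assms(1-4)] assms(5) by simp
  show ?thesis unfolding farpts_def e using assms(5) by auto
qed

lemma farpts_mono: "\<delta> \<le> \<delta>' \<Longrightarrow> farpts F x \<delta> \<subseteq> farpts F x \<delta>'"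
  unfolding farpts_def by auto

lemma enlarge_mono: "S \<subseteq> T \<Longrightarrow> enlarge S e \<subseteq> enlarge T e"
  unfolding enlarge_def by blast

lemma sc_sub:
  fixes F G :: "'a::real_normed_vector set"
  assumes "sup_compact_on G A" "x \<in> A" "G \<subseteq> F"
    and "farthest_dist G x = farthest_dist F x"
    and "strict_mono (h::nat\<Rightarrow>nat)" "\<forall>n. y (h n) \<in> G"
    and "(\<lambda>n. norm (x - y n)) \<longlonglongrightarrow> farthest_dist F x"
  shows "\<exists>g z. strict_mono g \<and> z \<in> F \<and> (y \<circ> g) \<longlonglongrightarrow> z"
proof -
  have "(\<lambda>n. norm (x - (y \<circ> h) n)) \<longlonglongrightarrow> farthest_dist G x"
    using LIMSEQ_subseq_LIMSEQ[OF assms(7) assms(5)] assms(4) by (simp add: o_def)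
  moreover have "\<forall>n. (y \<circ> h) n \<in> G" using assms(6) by simp
  ultimately obtain g z where g: "strict_mono g" "z \<in> G" "((y \<circ> h) \<circ> g) \<longlonglongrightarrow> z"
    using assms(1,2) unfolding sup_compact_on_def by blast
  have "strict_mono (h \<circ> g)" using g(1) assms(5) by (simp add: strict_mono_o)
  then show ?thesis using g assms(3) by (metis comp_assoc subsetD)
qed

theorem theorem2p10:
  fixes A F1 F2 :: "'a::banach set"
  assumes "A \<noteq> {}"
    and "F1 \<noteq> {}" "closed F1" "bounded F1"
    and "F2 \<noteq> {}" "closed F2" "bounded F2"
  shows
    "((\<forall>x\<in>A. farthest_dist F1 x > farthest_dist F2 x) \<longrightarrow>
        (remotal_on F1 A \<longrightarrow> remotal_on (F1 \<union> F2) A) \<and>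
        (uniquely_remotal_on F1 A \<longrightarrow> uniquely_remotal_on (F1 \<union> F2) A) \<and>
        (strongly_remotal_on F1 A \<longrightarrow> strongly_remotal_on (F1 \<union> F2) A) \<and>
        (SUR_on F1 A \<longrightarrow> SUR_on (F1 \<union> F2) A) \<and>
        (sup_compact_on F1 A \<longrightarrow> sup_compact_on (F1 \<union> F2) A) \<and>
        ((INF x\<in>A. farthest_dist F1 x - farthest_dist F2 x) > 0 \<and> USUR_on F1 A
           \<longrightarrow> USUR_on (F1 \<union> F2) A))
     \<and>
     ((\<forall>x\<in>A. farthest_dist F1 x = farthest_dist F2 x) \<longrightarrow>
        (sup_compact_on F1 A \<and> sup_compact_on F2 A \<longrightarrow> sup_compact_on (F1 \<union> F2) A) \<and>
        (strongly_remotal_on F1 A \<and> strongly_remotal_on F2 A \<longrightarrow> strongly_remotal_on (F1 \<union> F2) A) \<and>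
        (remotal_on F1 A \<and> remotal_on F2 A \<longrightarrow> remotal_on (F1 \<union> F2) A))"
proof (intro conjI impI)
  note B = assms(2,5,4,7)
  {
    assume gt: "\<forall>x\<in>A. farthest_dist F1 x > farthest_dist F2 x"
    have Q0: "\<And>x. x \<in> A \<Longrightarrow> farpts (F1 \<union> F2) x 0 = farpts F1 x 0"
      using farpts_gt[OF B] gt by force
    show "remotal_on F1 A \<Longrightarrow> remotal_on (F1 \<union> F2) A"
      unfolding remotal_on_def using Q0 by simp
    show U: "uniquely_remotal_on F1 A \<Longrightarrow> uniquely_remotal_on (F1 \<union> F2) A"
      unfolding uniquely_remotal_on_def using Q0 by simp
    show S: "strongly_remotal_on F1 A \<Longrightarrow> strongly_remotal_on (F1 \<union> F2) A"
      unfolding strongly_remotal_on_def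
    proof (intro ballI allI impI)
      fix x and e :: real
      assume h: "\<forall>x\<in>A. \<forall>\<epsilon>>0. \<exists>\<delta>>0. farpts F1 x \<delta> \<subseteq> enlarge (farpts F1 x 0) \<epsilon>"
        and x: "x \<in> A" and e: "e > 0"
      obtain d where d: "d > 0" "farpts F1 x d \<subseteq> enlarge (farpts F1 x 0) e"
        using h x e by blast
      define d' where "d' = min d ((farthest_dist F1 x - farthest_dist F2 x) / 2)"
      have d': "d' > 0" "d' \<le> d" "d' < farthest_dist F1 x - farthest_dist F2 x"
        using d gt x unfolding d'_def by (auto simp: min_def)
      have "farpts (F1 \<union> F2) x d' \<subseteq> enlarge (farpts (F1 \<union> F2) x 0) e"
        using farpts_gt[OF B _ d'(3)] gt x Q0[OF x] farpts_mono[OF d'(2), of F1 x] d(2) by auto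
      then show "\<exists>\<delta>>0. farpts (F1 \<union> F2) x \<delta> \<subseteq> enlarge (farpts (F1 \<union> F2) x 0) e"
        using d'(1) by blast
    qed
    show "SUR_on F1 A \<Longrightarrow> SUR_on (F1 \<union> F2) A"
      unfolding SUR_on_def using U S by blast
    show "sup_compact_on F1 A \<Longrightarrow> sup_compact_on (F1 \<union> F2) A"
      unfolding sup_compact_on_def
    proof (intro ballI allI impI)
      fix x and y :: "nat \<Rightarrow> 'a"
      assume h: "\<forall>x\<in>A. \<forall>y. (\<forall>n. y n \<in> F1) \<and> (\<lambda>n. norm (x - y n)) \<longlonglongrightarrow> farthest_dist F1 x \<longrightarrow>
           (\<exists>g z. strict_mono g \<and> z \<in> F1 \<and> (y \<circ> g) \<longlonglongrightarrow> z)"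
        and x: "x \<in> A"
        and y: "(\<forall>n. y n \<in> F1 \<union> F2) \<and> (\<lambda>n. norm (x - y n)) \<longlonglongrightarrow> farthest_dist (F1 \<union> F2) x"
      have e: "farthest_dist (F1 \<union> F2) x = farthest_dist F1 x"
        using fd_un[OF B] gt x by force
      have lim: "(\<lambda>n. norm (x - y n)) \<longlonglongrightarrow> farthest_dist F1 x" using y e by simp
      have "eventually (\<lambda>n. norm (x - y n) > farthest_dist F2 x) sequentially"
        using order_tendstoD(1)[OF lim] gt x by blast
      then obtain N where N: "\<And>n. n \<ge> N \<Longrightarrow> norm (x - y n) > farthest_dist F2 x"
        unfolding eventually_sequentially by blast
      have inF1: "\<And>n. n \<ge> N \<Longrightarrow> y n \<in> F1"
        using N y fd_le[OF assms(7)] by (meson UnE not_le)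
      define y' where "y' = (\<lambda>n. y (n + N))"
      have "(\<lambda>n. norm (x - y' n)) \<longlonglongrightarrow> farthest_dist F1 x"
        unfolding y'_def using LIMSEQ_ignore_initial_segment[OF lim, of N] by simp
      moreover have "\<forall>n. y' n \<in> F1" unfolding y'_def using inF1 by simp
      ultimately obtain g z where g: "strict_mono g" "z \<in> F1" "(y' \<circ> g) \<longlonglongrightarrow> z"
        using h x by blast
      have "strict_mono (\<lambda>n. g n + N)" using g(1) by (simp add: strict_mono_def)
      moreover have "y \<circ> (\<lambda>n. g n + N) = y' \<circ> g" unfolding y'_def by (simp add: o_def)
      ultimately show "\<exists>g z. strict_mono g \<and> z \<in> F1 \<union> F2 \<and> (y \<circ> g) \<longlonglongrightarrow> z"
        using g by (metis UnI1)
    qed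
    show "0 < (INF x\<in>A. farthest_dist F1 x - farthest_dist F2 x) \<and> USUR_on F1 A \<Longrightarrow>
      USUR_on (F1 \<union> F2) A"
    proof -
      assume h: "0 < (INF x\<in>A. farthest_dist F1 x - farthest_dist F2 x) \<and> USUR_on F1 A"
      define m where "m = (INF x\<in>A. farthest_dist F1 x - farthest_dist F2 x)"
      have bdd: "bdd_below ((\<lambda>x. farthest_dist F1 x - farthest_dist F2 x) ` A)"
        using gt by (intro bdd_belowI[of _ 0]) force
      have mle: "\<And>x. x \<in> A \<Longrightarrow> m \<le> farthest_dist F1 x - farthest_dist F2 x"
        unfolding m_def by (rule cINF_lower[OF bdd])
      have m0: "m > 0" using h m_def by simp
      have U1: "uniquely_remotal_on F1 A" using h by (simp add: USUR_on_def)
      have "\<forall>\<epsilon>>0. \<exists>\<delta>>0. \<forall>x\<in>A. farpts (F1 \<union> F2) x \<delta> \<subseteq> enlarge (farpts (F1 \<union> F2) x 0) \<epsilon>"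
      proof (intro allI impI)
        fix e :: real assume e: "e > 0"
        obtain d where d: "d > 0" "\<forall>x\<in>A. farpts F1 x d \<subseteq> enlarge (farpts F1 x 0) e"
          using h e unfolding USUR_on_def by blast
        define d' where "d' = min d (m / 2)"
        have d': "d' > 0" "d' \<le> d" using d m0 unfolding d'_def by auto
        have "\<forall>x\<in>A. farpts (F1 \<union> F2) x d' \<subseteq> enlarge (farpts (F1 \<union> F2) x 0) e"
        proof
          fix x assume x: "x \<in> A"
          have "d' < farthest_dist F1 x - farthest_dist F2 x"
            using mle[OF x] m0 unfolding d'_def by linarith
          then have "farpts (F1 \<union> F2) x d' = farpts F1 x d'"
            using farpts_gt[OF B] gt x by blast
          then show "farpts (F1 \<union> F2) x d' \<subseteq> enlarge (farpts (F1 \<union> F2) x 0) e"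
            using Q0[OF x] farpts_mono[OF d'(2), of F1 x] bspec[OF d(2) x] by auto
        qed
        then show "\<exists>\<delta>>0. \<forall>x\<in>A. farpts (F1 \<union> F2) x \<delta> \<subseteq> enlarge (farpts (F1 \<union> F2) x 0) e"
          using d'(1) by blast
      qed
      then show ?thesis unfolding USUR_on_def using U U1 by blast
    qed
  }
  {
    assume eq: "\<forall>x\<in>A. farthest_dist F1 x = farthest_dist F2 x"
    have Q: "farpts (F1 \<union> F2) x d = farpts F1 x d \<union> farpts F2 x d" if "x \<in> A" for x d
      by (rule farpts_eq[OF B bspec[OF eq that]])
    show "sup_compact_on F1 A \<and> sup_compact_on F2 A \<Longrightarrow> sup_compact_on (F1 \<union> F2) A"
    proof -
      assume h: "sup_compact_on F1 A \<and> sup_compact_on F2 A"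
      show ?thesis unfolding sup_compact_on_def
      proof (intro ballI allI impI)
        fix x and y :: "nat \<Rightarrow> 'a"
        assume x: "x \<in> A"
          and y: "(\<forall>n. y n \<in> F1 \<union> F2) \<and> (\<lambda>n. norm (x - y n)) \<longlonglongrightarrow> farthest_dist (F1 \<union> F2) x"
        have e1: "farthest_dist F1 x = farthest_dist (F1 \<union> F2) x"
          using fd_un[OF B, of x] bspec[OF eq x] by simp
        have e2: "farthest_dist F2 x = farthest_dist (F1 \<union> F2) x"
          using fd_un[OF B, of x] bspec[OF eq x] by simp
        have "{n. y n \<in> F1} \<union> {n. y n \<in> F2} = UNIV" using conjunct1[OF y] by auto
        then have "infinite {n. y n \<in> F1} \<or> infinite {n. y n \<in> F2}"
          using finite_UnI[of "{n. y n \<in> F1}" "{n. y n \<in> F2}"] infinite_UNIV_nat by auto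
        then show "\<exists>g z. strict_mono g \<and> z \<in> F1 \<union> F2 \<and> (y \<circ> g) \<longlonglongrightarrow> z"
        proof
          assume "infinite {n. y n \<in> F1}"
          then obtain r :: "nat \<Rightarrow> nat" where r: "strict_mono r" "\<forall>n. r n \<in> {n. y n \<in> F1}"
            using infinite_enumerate by blast
          have r2: "\<forall>n. y (r n) \<in> F1" using r(2) by simp
          have sc: "sup_compact_on F1 A" using h by blast
          show ?thesis by (rule sc_sub[of _ A x "F1 \<union> F2" r y, OF sc x _ e1 r(1) r2 conjunct2[OF y]]) simp
        next
          assume "infinite {n. y n \<in> F2}"
          then obtain r :: "nat \<Rightarrow> nat" where r: "strict_mono r" "\<forall>n. r n \<in> {n. y n \<in> F2}"
            using infinite_enumerate by blast
          have r2: "\<forall>n. y (r n) \<in> F2" using r(2) by simp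
          have sc: "sup_compact_on F2 A" using h by blast
          show ?thesis by (rule sc_sub[of _ A x "F1 \<union> F2" r y, OF sc x _ e2 r(1) r2 conjunct2[OF y]]) simp
        qed
      qed
    qed
    show "strongly_remotal_on F1 A \<and> strongly_remotal_on F2 A \<Longrightarrow> strongly_remotal_on (F1 \<union> F2) A"
      unfolding strongly_remotal_on_def
    proof (intro ballI allI impI)
      fix x and e :: real
      assume h: "(\<forall>x\<in>A. \<forall>\<epsilon>>0. \<exists>\<delta>>0. farpts F1 x \<delta> \<subseteq> enlarge (farpts F1 x 0) \<epsilon>) \<and>
                 (\<forall>x\<in>A. \<forall>\<epsilon>>0. \<exists>\<delta>>0. farpts F2 x \<delta> \<subseteq> enlarge (farpts F2 x 0) \<epsilon>)"
        and x: "x \<in> A" and e: "e > 0"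
      obtain d1 where d1: "d1 > 0" "farpts F1 x d1 \<subseteq> enlarge (farpts F1 x 0) e"
        using h x e by blast
      obtain d2 where d2: "d2 > 0" "farpts F2 x d2 \<subseteq> enlarge (farpts F2 x 0) e"
        using h x e by blast
      define d where "d = min d1 d2"
      have "farpts F1 x d \<subseteq> farpts F1 x d1" by (rule farpts_mono) (simp add: d_def)
      also have "\<dots> \<subseteq> enlarge (farpts F1 x 0) e" by (rule d1(2))
      also have "\<dots> \<subseteq> enlarge (farpts (F1 \<union> F2) x 0) e"
        by (rule enlarge_mono) (simp add: Q[OF x])
      finally have i1: "farpts F1 x d \<subseteq> enlarge (farpts (F1 \<union> F2) x 0) e" .
      have "farpts F2 x d \<subseteq> farpts F2 x d2" by (rule farpts_mono) (simp add: d_def)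
      also have "\<dots> \<subseteq> enlarge (farpts F2 x 0) e" by (rule d2(2))
      also have "\<dots> \<subseteq> enlarge (farpts (F1 \<union> F2) x 0) e"
        by (rule enlarge_mono) (simp add: Q[OF x])
      finally have i2: "farpts F2 x d \<subseteq> enlarge (farpts (F1 \<union> F2) x 0) e" .
      have "farpts (F1 \<union> F2) x d \<subseteq> enlarge (farpts (F1 \<union> F2) x 0) e"
        unfolding Q[OF x, of d] using i1 i2 by (rule Un_least)
      moreover have "d > 0" using d1 d2 d_def by auto
      ultimately show "\<exists>\<delta>>0. farpts (F1 \<union> F2) x \<delta> \<subseteq> enlarge (farpts (F1 \<union> F2) x 0) e"
        by blast
    qed
    show "remotal_on F1 A \<and> remotal_on F2 A \<Longrightarrow> remotal_on (F1 \<union> F2) A"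
      unfolding remotal_on_def using Q by auto
  }
qed

end
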